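(* Let $\epsilon>0$ be a constant and let the input graph have $n$ vertices. In any call to ContractLayer, within each outer round there are at most $O(\log n)$ inner rounds, with high probability.
   Context: Setting: an undirected graph $G=(V,E,w)$ with $n$ vertices and positive edge weights. A partition of $V$ into clusters is maintained (initially singletons), together with the cluster graph $H$ whose vertices are the clusters, with an edge between clusters $X\neq Y$ iff $G$ has an edge between them, of average-linkage weight $\mathcal{W}(X,Y)=\sum_{(x,y)\in E,\,x\in X,\,y\in Y} w(x,y)/(|X||Y|)$. The size $|X|$ of a vertex of $H$ is the size of its cluster; merging means replacing two clusters by their union. ContractLayer$(H,T_L,\epsilon)$: while the maximum edge weight of $H$ is at least $T_L$, perform an outer round: color each non-isolated vertex of $H$ red or blue independently with probability $1/2$ each; let $G_c$ consist of the edges of $H$ of weight $\ge T_L$ joining a blue vertex $x$ to a red vertex $y$ with $|y|\ge|x|$. While $G_c$ has edges, perform an inner round: each blue vertex $b$ picks an independent uniform priority $\pi_b\in[0,1]$ and a uniformly random red neighbor $C_b$ in $G_c$ (blue vertices with no red neighbor in $G_c$ do nothing); for each red $r$, order the blue vertices proposing to $r$ by priority and select the shortest prefix whose total cluster size exceeds $\epsilon|r|$ (all of them if no prefix does); merge every selected blue vertex into its red vertex, updating all edge weights of $H$ and $G_c$ exactly; then remove from $G_c$ every edge with two red endpoints or weight below $T_L$, and remove from $G_c$ every red vertex whose cluster size has grown by more than a factor $(1+\epsilon)$ since the start of the outer round. "With high probability" means: for every constant $k$, the bound holds (with constant depending on $k$) with probability at least $1-n^{-k}$. *)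

theory Defs
  imports "HOL-Probability.Probability" "HOL-Combinatorics.Multiset_Permutations"
begin

(* Vertices of G are 0..<n.  Weights: w :: nat => nat => real, symmetric, nonnegative,
   w x y > 0 iff {x,y} is an edge of G (weight w x y), w x y = 0 for non-edges.
   A partition of V into clusters is given by a labelling rep :: nat => nat; the cluster
   with label a is {v<n. rep v = a}.  Labels of red clusters persist under merging. *)

type_synonym labeling = "nat \<Rightarrow> nat"
type_synonym cstate = "labeling \<times> (nat \<times> nat) set"  (* (labelling, edge set of G_c as (blue,red) pairs) *)

definition cl :: "nat \<Rightarrow> labeling \<Rightarrow> nat \<Rightarrow> nat set" where
  "cl n rep a = {v. v < n \<and> rep v = a}"

definition csize :: "nat \<Rightarrow> labeling \<Rightarrow> nat \<Rightarrow> nat" where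
  "csize n rep a = card (cl n rep a)"

definition W :: "nat \<Rightarrow> (nat \<Rightarrow> nat \<Rightarrow> real) \<Rightarrow> labeling \<Rightarrow> nat \<Rightarrow> nat \<Rightarrow> real" where
  "W n w rep a c =
     (\<Sum>x\<in>cl n rep a. \<Sum>y\<in>cl n rep c. w x y) / (real (csize n rep a) * real (csize n rep c))"

definition H_edge :: "nat \<Rightarrow> (nat \<Rightarrow> nat \<Rightarrow> real) \<Rightarrow> labeling \<Rightarrow> nat \<Rightarrow> nat \<Rightarrow> bool" where
  "H_edge n w rep a c \<longleftrightarrow> a \<noteq> c \<and> (\<exists>x\<in>cl n rep a. \<exists>y\<in>cl n rep c. w x y > 0)"

definition nonisolated :: "nat \<Rightarrow> (nat \<Rightarrow> nat \<Rightarrow> real) \<Rightarrow> labeling \<Rightarrow> nat set" where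
  "nonisolated n w rep = {a. \<exists>c. H_edge n w rep a c}"

(* random colouring of the non-isolated vertices: True = red, False = blue,
   independently with probability 1/2 (the default value outside the non-isolated
   vertices is irrelevant since those have no edges) *)
definition colouring :: "nat \<Rightarrow> (nat \<Rightarrow> nat \<Rightarrow> real) \<Rightarrow> labeling \<Rightarrow> (nat \<Rightarrow> bool) pmf" where
  "colouring n w rep = Pi_pmf (nonisolated n w rep) False (\<lambda>_. bernoulli_pmf (1/2))"

definition Gc0 :: "nat \<Rightarrow> (nat \<Rightarrow> nat \<Rightarrow> real) \<Rightarrow> labeling \<Rightarrow> real \<Rightarrow> (nat \<Rightarrow> bool) \<Rightarrow> (nat \<times> nat) set" where
  "Gc0 n w rep T col = {(b, r). H_edge n w rep b r \<and> W n w rep b r \<ge> T \<and> \<not> col b \<and> col r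
                                \<and> csize n rep r \<ge> csize n rep b}"

fun sel_prefix :: "(nat \<Rightarrow> real) \<Rightarrow> real \<Rightarrow> real \<Rightarrow> nat list \<Rightarrow> nat list" where
  "sel_prefix sz thr acc [] = []"
| "sel_prefix sz thr acc (b # bs) =
     (if acc + sz b > thr then [b] else b # sel_prefix sz thr (acc + sz b) bs)"

(* One inner round.  s0 = cluster sizes at the start of the outer round.
   Priorities: uniformly random order of the blue vertices. *)
definition inner_step ::
  "nat \<Rightarrow> (nat \<Rightarrow> nat \<Rightarrow> real) \<Rightarrow> real \<Rightarrow> real \<Rightarrow> (nat \<Rightarrow> nat) \<Rightarrow> cstate \<Rightarrow> cstate pmf" where
  "inner_step n w T eps s0 st =
    (let rep = fst st; Gc = snd st; B = fst ` Gc; nbr = (\<lambda>b. {r. (b, r) \<in> Gc}) in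
     if Gc = {} then return_pmf st else
     bind_pmf (pmf_of_set (permutations_of_set B)) (\<lambda>order.
     bind_pmf (Pi_pmf B 0 (\<lambda>b. pmf_of_set (nbr b))) (\<lambda>choice.
       let sz = (\<lambda>a. real (csize n rep a));
           selected = (\<lambda>r. set (sel_prefix sz (eps * sz r) 0 (filter (\<lambda>b. choice b = r) order)));
           merged = {b \<in> B. b \<in> selected (choice b)};
           rep' = (\<lambda>v. if rep v \<in> merged then choice (rep v) else rep v);
           Gc' = {(b, r) \<in> Gc. b \<notin> merged \<and> W n w rep' b r \<ge> T
                               \<and> real (csize n rep' r) \<le> (1 + eps) * real (s0 r)}
       in return_pmf (rep', Gc'))))"

fun inner_iter ::
  "nat \<Rightarrow> (nat \<Rightarrow> nat \<Rightarrow> real) \<Rightarrow> real \<Rightarrow> real \<Rightarrow> (nat \<Rightarrow> nat) \<Rightarrow> nat \<Rightarrow> cstate \<Rightarrow> cstate pmf" where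
  "inner_iter n w T eps s0 0 st = return_pmf st"
| "inner_iter n w T eps s0 (Suc m) st = bind_pmf (inner_step n w T eps s0 st) (inner_iter n w T eps s0 m)"

definition outer_round_after ::
  "nat \<Rightarrow> (nat \<Rightarrow> nat \<Rightarrow> real) \<Rightarrow> real \<Rightarrow> real \<Rightarrow> labeling \<Rightarrow> nat \<Rightarrow> cstate pmf" where
  "outer_round_after n w T eps rep m =
     bind_pmf (colouring n w rep)
       (\<lambda>col. inner_iter n w T eps (csize n rep) m (rep, Gc0 n w rep T col))"

(* more than m inner rounds happen iff G_c is still nonempty after m inner rounds *)
definition more_than_inner_rounds ::
  "nat \<Rightarrow> (nat \<Rightarrow> nat \<Rightarrow> real) \<Rightarrow> real \<Rightarrow> real \<Rightarrow> labeling \<Rightarrow> nat \<Rightarrow> real" where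
  "more_than_inner_rounds n w T eps rep m =
     measure_pmf.prob (outer_round_after n w T eps rep m) {st. snd st \<noteq> {}}"

end

theory Submission
  imports Defs
begin

lemma quarter_bound:
  fixes a d :: nat assumes "a \<le> d" "d > 0"
  shows "of_nat (a * (d - a)) / of_nat d \<le> (ennreal (real d / 4))"
proof -
  have r: "real (a * (d - a)) / real d \<le> real d / 4"
  proof -
    have "4 * (real a * (real d - real a)) \<le> real d * real d"
    proof -
      have "0 \<le> (real d - 2 * real a)^2" by simp
      then show ?thesis by (simp add: power2_eq_square algebra_simps)
    qed
    then show ?thesis using assms by (simp add: field_simps of_nat_diff)
  qed
  have "of_nat (a * (d - a)) / (of_nat d :: ennreal) = ennreal (real (a * (d - a)) / real d)"
    using assms by (simp add: ennreal_of_nat_eq_real_of_nat divide_ennreal)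
  then show ?thesis using r by (simp add: ennreal_leI)
qed

lemma pair_swap_nn:
  "(\<integral>\<^sup>+x. g (snd x) (fst x) \<partial>pair_pmf P Q) = (\<integral>\<^sup>+f. \<integral>\<^sup>+y. g f y \<partial>P \<partial>Q)"
proof -
  have "(\<integral>\<^sup>+x. g (snd x) (fst x) \<partial>pair_pmf P Q) = (\<integral>\<^sup>+x. g (fst x) (snd x) \<partial>pair_pmf Q P)"
    by (subst pair_commute_pmf) (simp add: case_prod_beta)
  also have "\<dots> = (\<integral>\<^sup>+f. \<integral>\<^sup>+y. g f y \<partial>P \<partial>Q)"
    by (simp add: nn_integral_pair_pmf')
  finally show ?thesis .
qed

lemma pi_bound:
  fixes B :: "nat set" and p :: "nat \<Rightarrow> nat pmf" and E :: "(nat \<Rightarrow> nat) \<Rightarrow> nat \<Rightarrow> bool"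
  assumes fin: "finite B" and bB: "b \<in> B" and S: "finite S" "S \<noteq> {}" and pb: "p b = pmf_of_set S"
    and Einv: "\<And>f y r. E (f(b:=y)) r = E f r"
  shows "(\<integral>\<^sup>+f. (if E f (f b) then of_nat (card {r\<in>S. \<not> E f r}) else 0) \<partial>Pi_pmf B 0 p)
         \<le> ennreal (real (card S) / 4)"
proof -
  let ?G = "\<lambda>f. (if E f (f b) then of_nat (card {r\<in>S. \<not> E f r}) else 0) :: ennreal"
  have BB: "B = insert b (B - {b})" using bB by auto
  have "Pi_pmf B 0 p = map_pmf (\<lambda>(y,f). f(b:=y)) (pair_pmf (p b) (Pi_pmf (B - {b}) 0 p))"
    using fin by (subst BB, subst Pi_pmf_insert) auto
  then have "(\<integral>\<^sup>+f. ?G f \<partial>Pi_pmf B 0 p) = (\<integral>\<^sup>+x. ?G ((snd x)(b := fst x)) \<partial>pair_pmf (p b) (Pi_pmf (B - {b}) 0 p))"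
    by (simp add: case_prod_unfold)
  also have "\<dots> = (\<integral>\<^sup>+f. \<integral>\<^sup>+y. ?G (f(b:=y)) \<partial>p b \<partial>Pi_pmf (B - {b}) 0 p)"
    by (rule pair_swap_nn)
  also have "\<dots> \<le> (\<integral>\<^sup>+f. ennreal (real (card S) / 4) \<partial>Pi_pmf (B - {b}) 0 p)"
  proof (rule nn_integral_mono)
    fix f
    let ?a = "card {r\<in>S. E f r}"
    have "(\<integral>\<^sup>+y. ?G (f(b:=y)) \<partial>p b) = (\<Sum>y\<in>S. (if E f y then of_nat (card {r\<in>S. \<not> E f r}) else 0)) / of_nat (card S)"
    proof -
      have e: "\<And>y. {r\<in>S. \<not> E (f(b:=y)) r} = {r\<in>S. \<not> E f r}" using Einv by blast
      have pt: "\<And>y. ?G (f(b:=y)) = (if E f y then of_nat (card {r\<in>S. \<not> E f r}) else 0)"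
        by (simp only: e Einv fun_upd_same)
      show ?thesis unfolding pt pb by (rule nn_integral_pmf_of_set[OF S(2) S(1)])
    qed
    also have "(\<Sum>y\<in>S. (if E f y then of_nat (card {r\<in>S. \<not> E f r}) else 0)) = (of_nat (?a * (card S - ?a)) :: ennreal)"
    proof -
      have "card {r\<in>S. \<not> E f r} = card S - ?a"
      proof -
        have "{r\<in>S. \<not> E f r} = S - {r\<in>S. E f r}" by blast
        then show ?thesis using S(1) by (simp add: card_Diff_subset)
      qed
      then show ?thesis using S by (simp add: sum.If_cases Int_def)
    qed
    also have "of_nat (?a * (card S - ?a)) / of_nat (card S) \<le> ennreal (real (card S) / 4)"
      apply (rule quarter_bound) using S by (auto intro: card_mono simp: card_gt_0_iff)
    finally show "(\<integral>\<^sup>+y. ?G (f(b:=y)) \<partial>p b) \<le> ennreal (real (card S) / 4)" .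
  qed
  also have "\<dots> = ennreal (real (card S) / 4)" by simp
  finally show ?thesis .
qed

lemma sel_prefix_subset: "set (sel_prefix sz thr acc L) \<subseteq> set L"
  by (induction L arbitrary: acc) auto

lemma sel_prefix_distinct: "distinct L \<Longrightarrow> distinct (sel_prefix sz thr acc L)"
proof (induction L arbitrary: acc)
  case (Cons a L) then show ?case using sel_prefix_subset[of sz thr _ L] by auto
qed simp

lemma sel_prefix_exceed:
  "acc + sum_list (map sz L) > thr \<Longrightarrow> acc + sum_list (map sz (sel_prefix sz thr acc L)) > thr"
proof (induction L arbitrary: acc)
  case (Cons a L)
  show ?case
  proof (cases "acc + sz a > thr")
    case False
    then have "(acc + sz a) + sum_list (map sz L) > thr" using Cons.prems by (simp add: add.assoc)
    from Cons.IH[OF this] False show ?thesis by (simp add: add.assoc)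
  qed simp
qed simp

lemma sel_prefix_rejected:
  "b \<in> set L \<Longrightarrow> b \<notin> set (sel_prefix sz thr acc L) \<Longrightarrow> acc + sum_list (map sz (sel_prefix sz thr acc L)) > thr"
proof (induction L arbitrary: acc)
  case (Cons a L)
  show ?case
  proof (cases "acc + sz a > thr")
    case False
    then have "b \<in> set L" "b \<notin> set (sel_prefix sz thr (acc + sz a) L)" using Cons.prems by auto
    from Cons.IH[OF this] False show ?thesis by (simp add: add.assoc)
  qed simp
qed simp

definition selR :: "nat \<Rightarrow> real \<Rightarrow> labeling \<Rightarrow> nat list \<Rightarrow> (nat \<Rightarrow> nat) \<Rightarrow> nat \<Rightarrow> nat list" where
  "selR n eps rep os choice r =
     sel_prefix (\<lambda>a. real (csize n rep a)) (eps * real (csize n rep r)) 0 (filter (\<lambda>b. choice b = r) os)"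

definition mergedS :: "nat \<Rightarrow> real \<Rightarrow> labeling \<Rightarrow> (nat \<times> nat) set \<Rightarrow> nat list \<Rightarrow> (nat \<Rightarrow> nat) \<Rightarrow> nat set" where
  "mergedS n eps rep Gc os choice = {b \<in> fst ` Gc. b \<in> set (selR n eps rep os choice (choice b))}"

definition repN :: "nat \<Rightarrow> real \<Rightarrow> labeling \<Rightarrow> (nat \<times> nat) set \<Rightarrow> nat list \<Rightarrow> (nat \<Rightarrow> nat) \<Rightarrow> labeling" where
  "repN n eps rep Gc os choice = (\<lambda>v. if rep v \<in> mergedS n eps rep Gc os choice then choice (rep v) else rep v)"

definition GcN where
  "GcN n w T eps s0 rep Gc os choice =
     {(b, r) \<in> Gc. b \<notin> mergedS n eps rep Gc os choice \<and> W n w (repN n eps rep Gc os choice) b r \<ge> T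
         \<and> real (csize n (repN n eps rep Gc os choice) r) \<le> (1 + eps) * real (s0 r)}"

lemma inner_step_eq:
  assumes "Gc \<noteq> {}"
  shows "inner_step n w T eps s0 (rep, Gc) =
    bind_pmf (pmf_of_set (permutations_of_set (fst ` Gc))) (\<lambda>os.
     bind_pmf (Pi_pmf (fst ` Gc) 0 (\<lambda>b. pmf_of_set {r. (b, r) \<in> Gc})) (\<lambda>choice.
       return_pmf (repN n eps rep Gc os choice, GcN n w T eps s0 rep Gc os choice)))"
  using assms unfolding inner_step_def Let_def prod.sel GcN_def repN_def mergedS_def selR_def by simp

definition EE :: "nat \<Rightarrow> labeling \<Rightarrow> (nat \<times> nat) set \<Rightarrow> nat \<Rightarrow> real \<Rightarrow> (nat \<Rightarrow> nat) \<Rightarrow> nat \<Rightarrow> bool" where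
  "EE n rep Gc b eps f r \<longleftrightarrow>
     (\<Sum>b'\<in>{b'\<in>fst ` Gc - {b}. f b' = r}. real (csize n rep b')) > eps * real (csize n rep r)"

lemma finite_cl: "finite (cl n rep a)"
  unfolding cl_def by auto

lemma cl_disj: "a \<noteq> c \<Longrightarrow> cl n rep a \<inter> cl n rep c = {}"
  unfolding cl_def by auto

lemma sum_list_filter_distinct:
  assumes "distinct os" "set os = B"
  shows "sum_list (map sz (filter P os)) = (\<Sum>b\<in>{b\<in>B. P b}. sz b)"
proof -
  have "sum_list (map sz (filter P os)) = sum sz (set (filter P os))"
    using assms by (simp add: sum_list_distinct_conv_sum_set)
  also have "set (filter P os) = {b\<in>B. P b}" using assms by auto
  finally show ?thesis .
qed

context
  fixes n :: nat and eps :: real and rep :: labeling and Gc :: "(nat \<times> nat) set"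
    and os :: "nat list" and choice :: "nat \<Rightarrow> nat"
  assumes osd: "distinct os" and oss: "set os = fst ` Gc"
begin

lemma selR_sub: "set (selR n eps rep os choice r) \<subseteq> {b\<in>fst ` Gc. choice b = r}"
  unfolding selR_def using sel_prefix_subset oss by fastforce

lemma selR_distinct: "distinct (selR n eps rep os choice r)"
  unfolding selR_def using osd by (intro sel_prefix_distinct) simp

lemma mergedS_sub: "mergedS n eps rep Gc os choice \<subseteq> fst ` Gc"
  unfolding mergedS_def by auto

lemma repN_iff:
  assumes rB: "r \<notin> fst ` Gc"
  shows "repN n eps rep Gc os choice v = r \<longleftrightarrow> rep v = r \<or> rep v \<in> set (selR n eps rep os choice r)"
proof (cases "rep v \<in> mergedS n eps rep Gc os choice")
  case True
  then have m: "rep v \<in> fst ` Gc" "rep v \<in> set (selR n eps rep os choice (choice (rep v)))"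
    unfolding mergedS_def by auto
  have "rep v \<in> set (selR n eps rep os choice r) \<Longrightarrow> choice (rep v) = r"
    using selR_sub[of r] by auto
  then show ?thesis using True m rB unfolding repN_def by auto
next
  case False
  have "rep v \<notin> set (selR n eps rep os choice r)"
  proof
    assume a: "rep v \<in> set (selR n eps rep os choice r)"
    then have "rep v \<in> fst ` Gc" "choice (rep v) = r" using selR_sub[of r] by auto
    then show False using False a unfolding mergedS_def by auto
  qed
  moreover have "repN n eps rep Gc os choice v = rep v" using False unfolding repN_def by simp
  ultimately show ?thesis by simp
qed

lemma cl_repN:
  assumes rB: "r \<notin> fst ` Gc"
  shows "cl n (repN n eps rep Gc os choice) r = cl n rep r \<union> (\<Union>b\<in>set (selR n eps rep os choice r). cl n rep b)"
proof (rule set_eqI)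
  fix v
  show "v \<in> cl n (repN n eps rep Gc os choice) r \<longleftrightarrow> v \<in> cl n rep r \<union> (\<Union>b\<in>set (selR n eps rep os choice r). cl n rep b)"
    unfolding cl_def using repN_iff[OF rB, of v] by blast
qed

lemma csize_repN:
  assumes rB: "r \<notin> fst ` Gc"
  shows "real (csize n (repN n eps rep Gc os choice) r) =
     real (csize n rep r) + sum_list (map (\<lambda>a. real (csize n rep a)) (selR n eps rep os choice r))"
proof -
  let ?S = "set (selR n eps rep os choice r)"
  have rS: "r \<notin> ?S" using selR_sub[of r] rB by auto
  have d1: "cl n rep r \<inter> (\<Union>b\<in>?S. cl n rep b) = {}" using rS unfolding cl_def by blast
  have "card (cl n (repN n eps rep Gc os choice) r) = card (cl n rep r) + card (\<Union>b\<in>?S. cl n rep b)"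
    unfolding cl_repN[OF rB] by (rule card_Un_disjoint) (auto simp: finite_cl d1)
  also have "card (\<Union>b\<in>?S. cl n rep b) = (\<Sum>b\<in>?S. card (cl n rep b))"
    by (rule card_UN_disjoint) (auto simp: finite_cl cl_disj)
  finally have "csize n (repN n eps rep Gc os choice) r = csize n rep r + (\<Sum>b\<in>?S. csize n rep b)"
    unfolding csize_def .
  then show ?thesis
    using selR_distinct[of r] by (simp add: sum_list_distinct_conv_sum_set)
qed

end

context
  fixes n :: nat and eps :: real and rep rep0 :: labeling and Gc :: "(nat \<times> nat) set"
    and os :: "nat list" and choice :: "nat \<Rightarrow> nat" and col :: "nat \<Rightarrow> bool"
  assumes osd: "distinct os" and oss: "set os = fst ` Gc"
    and epos: "eps > 0" and fin: "finite Gc"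
    and colr: "\<forall>(b', r)\<in>Gc. \<not> col b' \<and> col r"
    and grow: "\<forall>r. col r \<longrightarrow> cl n rep0 r \<subseteq> cl n rep r"
begin

lemma red_notB: "col r \<Longrightarrow> r \<notin> fst ` Gc"
  using colr by auto

lemma removed:
  assumes cr: "col r" and E: "EE n rep Gc b eps choice r"
  shows "real (csize n (repN n eps rep Gc os choice) r) > (1 + eps) * real (csize n rep0 r)"
proof -
  let ?sz = "\<lambda>a. real (csize n rep a)"
  have rB: "r \<notin> fst ` Gc" using red_notB[OF cr] .
  have fB: "finite (fst ` Gc)" using fin by simp
  have "(\<Sum>b'\<in>{b'\<in>fst ` Gc - {b}. choice b' = r}. ?sz b') \<le> (\<Sum>b'\<in>{b'\<in>fst ` Gc. choice b' = r}. ?sz b')"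
    by (rule sum_mono2) (use fB in auto)
  also have "\<dots> = sum_list (map ?sz (filter (\<lambda>b. choice b = r) os))"
    using sum_list_filter_distinct[OF osd oss] by metis
  finally have "0 + sum_list (map ?sz (filter (\<lambda>b. choice b = r) os)) > eps * ?sz r"
    using E unfolding EE_def by simp
  from sel_prefix_exceed[OF this] have s: "sum_list (map ?sz (selR n eps rep os choice r)) > eps * ?sz r"
    unfolding selR_def by simp
  have "csize n rep0 r \<le> csize n rep r"
    unfolding csize_def using grow cr by (intro card_mono) (auto simp: finite_cl)
  then have "(1 + eps) * real (csize n rep0 r) \<le> (1 + eps) * ?sz r"
    using epos by (intro mult_left_mono) auto
  also have "\<dots> < ?sz r + sum_list (map ?sz (selR n eps rep os choice r))"
    using s by (simp add: algebra_simps)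
  also have "\<dots> = real (csize n (repN n eps rep Gc os choice) r)"
    using csize_repN[OF osd oss rB] by simp
  finally show ?thesis .
qed

lemma not_merged_E:
  assumes bB: "b \<in> fst ` Gc" and nm: "b \<notin> mergedS n eps rep Gc os choice"
  shows "EE n rep Gc b eps choice (choice b)"
proof -
  let ?sz = "\<lambda>a. real (csize n rep a)"
  let ?L = "filter (\<lambda>b'. choice b' = choice b) os"
  let ?sel = "selR n eps rep os choice (choice b)"
  have fB: "finite (fst ` Gc)" using fin by simp
  have "b \<in> set ?L" using bB oss by auto
  moreover have "b \<notin> set ?sel" using nm bB unfolding mergedS_def by auto
  ultimately have "0 + sum_list (map ?sz ?sel) > eps * ?sz (choice b)"
    unfolding selR_def by (rule sel_prefix_rejected)
  moreover have "sum_list (map ?sz ?sel) = (\<Sum>b'\<in>set ?sel. ?sz b')"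
    using selR_distinct[OF osd oss] by (simp add: sum_list_distinct_conv_sum_set)
  moreover have "(\<Sum>b'\<in>set ?sel. ?sz b') \<le> (\<Sum>b'\<in>{b'\<in>fst ` Gc - {b}. choice b' = choice b}. ?sz b')"
    apply (rule sum_mono2)
    using fB selR_sub[where n=n and eps=eps and rep=rep and Gc=Gc and os=os and choice=choice and r="choice b", OF osd oss] \<open>b \<notin> set ?sel\<close> by auto
  ultimately show ?thesis unfolding EE_def by simp
qed

lemma det_bound:
  assumes bB: "b \<in> fst ` Gc"
  shows "card {r. (b, r) \<in> GcN n w T eps (csize n rep0) rep Gc os choice}
     \<le> (if EE n rep Gc b eps choice (choice b) then card {r\<in>{r. (b, r) \<in> Gc}. \<not> EE n rep Gc b eps choice r} else 0)"
proof (cases "b \<in> mergedS n eps rep Gc os choice")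
  case True
  then have "{r. (b, r) \<in> GcN n w T eps (csize n rep0) rep Gc os choice} = {}"
    unfolding GcN_def by auto
  then show ?thesis by simp
next
  case False
  have E: "EE n rep Gc b eps choice (choice b)" using not_merged_E[OF bB False] .
  have fn: "finite {r\<in>{r. (b, r) \<in> Gc}. \<not> EE n rep Gc b eps choice r}"
    by (rule finite_subset[of _ "snd ` Gc"]) (use fin in force)+
  have "{r. (b, r) \<in> GcN n w T eps (csize n rep0) rep Gc os choice} \<subseteq> {r\<in>{r. (b, r) \<in> Gc}. \<not> EE n rep Gc b eps choice r}"
  proof
    fix r assume r: "r \<in> {r. (b, r) \<in> GcN n w T eps (csize n rep0) rep Gc os choice}"
    then have inG: "(b, r) \<in> Gc" and le: "real (csize n (repN n eps rep Gc os choice) r) \<le> (1 + eps) * real (csize n rep0 r)"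
      unfolding GcN_def by auto
    have "col r" using inG colr by auto
    then have "\<not> EE n rep Gc b eps choice r" using removed le by fastforce
    then show "r \<in> {r\<in>{r. (b, r) \<in> Gc}. \<not> EE n rep Gc b eps choice r}" using inG by simp
  qed
  then show ?thesis using E fn by (simp add: card_mono)
qed

lemma inv_pres:
  shows "GcN n w T eps (csize n rep0) rep Gc os choice \<subseteq> Gc"
    and "\<forall>r. col r \<longrightarrow> cl n rep0 r \<subseteq> cl n (repN n eps rep Gc os choice) r"
proof -
  show "GcN n w T eps (csize n rep0) rep Gc os choice \<subseteq> Gc" unfolding GcN_def by auto
  show "\<forall>r. col r \<longrightarrow> cl n rep0 r \<subseteq> cl n (repN n eps rep Gc os choice) r"
  proof (intro allI impI)
    fix r assume cr: "col r"
    have "cl n rep r \<subseteq> cl n (repN n eps rep Gc os choice) r"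
      using cl_repN[OF osd oss red_notB[OF cr]] by blast
    then show "cl n rep0 r \<subseteq> cl n (repN n eps rep Gc os choice) r" using grow cr by blast
  qed
qed

end

definition invS :: "nat \<Rightarrow> labeling \<Rightarrow> (nat \<Rightarrow> bool) \<Rightarrow> cstate \<Rightarrow> bool" where
  "invS n rep0 col st \<longleftrightarrow> finite (snd st) \<and> (\<forall>(b', r)\<in>snd st. \<not> col b' \<and> col r)
      \<and> (\<forall>r. col r \<longrightarrow> cl n rep0 r \<subseteq> cl n (fst st) r)"

lemma t1:
  assumes "finite B" "G \<subseteq> Gc" "fst ` Gc = B"
  shows "G = (\<Union>b\<in>B. {b} \<times> {r. (b, r) \<in> G})"
  proof (rule set_eqI)
    fix x :: "'a \<times> 'b"
    obtain a c where x: "x = (a, c)" by (cases x)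
    have "x \<in> G \<Longrightarrow> a \<in> B" using assms(2,3) x by force
    then show "x \<in> G \<longleftrightarrow> x \<in> (\<Union>b\<in>B. {b} \<times> {r. (b, r) \<in> G})"
      unfolding x by auto
  qed
lemma card_le_sum_rows:
  assumes "finite B" "G \<subseteq> Gc" "fst ` Gc = B"
  shows "card G \<le> (\<Sum>b\<in>B. card {r. (b, r) \<in> G})"
proof -
  have "card (\<Union>b\<in>B. {b} \<times> {r. (b, r) \<in> G}) \<le> (\<Sum>b\<in>B. card ({b} \<times> {r. (b, r) \<in> G}))" by (rule card_UN_le) (rule assms(1))
  then show ?thesis using t1[OF assms] by (simp add: card_cartesian_product_singleton)
qed
lemma card_rows:
  assumes "finite Gc"
  shows "card Gc = (\<Sum>b\<in>fst ` Gc. card {r. (b, r) \<in> Gc})"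
proof -
  have e: "Sigma (fst ` Gc) (\<lambda>b. {r. (b, r) \<in> Gc}) = Gc"
  proof (rule set_eqI)
    fix x :: "'a \<times> 'b"
    obtain a c where x: "x = (a, c)" by (cases x)
    show "x \<in> Sigma (fst ` Gc) (\<lambda>b. {r. (b, r) \<in> Gc}) \<longleftrightarrow> x \<in> Gc"
      unfolding x by (auto intro: rev_image_eqI)
  qed
  have f: "\<forall>b\<in>fst ` Gc. finite {r. (b, r) \<in> Gc}"
  proof
    fix b have "{r. (b, r) \<in> Gc} \<subseteq> snd ` Gc" by (auto intro: rev_image_eqI)
    then show "finite {r. (b, r) \<in> Gc}" using assms finite_subset by blast
  qed
  have "card (Sigma (fst ` Gc) (\<lambda>b. {r. (b, r) \<in> Gc})) = (\<Sum>b\<in>fst ` Gc. card {r. (b, r) \<in> Gc})"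
    using assms f by (intro card_SigmaI) auto
  then show ?thesis unfolding e .
qed

lemma step_choice_bound:
  assumes epos: "eps > 0" and I: "invS n rep0 col (rep, Gc)"
    and osd: "distinct os" and oss: "set os = fst ` Gc"
  shows "(\<integral>\<^sup>+ch. of_nat (card (GcN n w T eps (csize n rep0) rep Gc os ch))
            \<partial>Pi_pmf (fst ` Gc) 0 (\<lambda>b. pmf_of_set {r. (b, r) \<in> Gc}))
         \<le> ennreal (real (card Gc) / 4)"
proof -
  let ?B = "fst ` Gc"
  let ?P = "Pi_pmf (fst ` Gc) 0 (\<lambda>b. pmf_of_set {r. (b, r) \<in> Gc})"
  let ?G = "\<lambda>b f. (if EE n rep Gc b eps f (f b) then of_nat (card {r\<in>{r. (b, r) \<in> Gc}. \<not> EE n rep Gc b eps f r}) else 0) :: ennreal"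
  have fin: "finite Gc" and colr: "\<forall>(b', r)\<in>Gc. \<not> col b' \<and> col r"
    and grow: "\<forall>r. col r \<longrightarrow> cl n rep0 r \<subseteq> cl n rep r"
    using I unfolding invS_def by auto
  have fB: "finite ?B" using fin by simp
  have pt: "of_nat (card (GcN n w T eps (csize n rep0) rep Gc os ch)) \<le> (\<Sum>b\<in>?B. ?G b ch)" for ch
  proof -
    have c: "card (GcN n w T eps (csize n rep0) rep Gc os ch) \<le> (\<Sum>b\<in>?B. card {r. (b, r) \<in> GcN n w T eps (csize n rep0) rep Gc os ch})"
      by (rule card_le_sum_rows[OF fB _ refl]) (unfold GcN_def, auto)
    have "(of_nat (card (GcN n w T eps (csize n rep0) rep Gc os ch)) :: ennreal)
        \<le> (\<Sum>b\<in>?B. of_nat (card {r. (b, r) \<in> GcN n w T eps (csize n rep0) rep Gc os ch}))"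
    proof -
      from of_nat_mono[OF c] show ?thesis by (simp only: of_nat_sum)
    qed
    also have "\<dots> \<le> (\<Sum>b\<in>?B. ?G b ch)"
    proof (rule sum_mono)
      fix b assume bB: "b \<in> ?B"
      note d = det_bound[OF osd oss epos fin colr grow bB, of w T ch]
      show "of_nat (card {r. (b, r) \<in> GcN n w T eps (csize n rep0) rep Gc os ch}) \<le> ?G b ch"
      proof (cases "EE n rep Gc b eps ch (ch b)")
        case True
        then show ?thesis using of_nat_mono[OF d] by simp
      next
        case False
        then show ?thesis using d by simp
      qed
    qed
    finally show ?thesis .
  qed
  have "(\<integral>\<^sup>+ch. of_nat (card (GcN n w T eps (csize n rep0) rep Gc os ch)) \<partial>?P) \<le> (\<integral>\<^sup>+ch. (\<Sum>b\<in>?B. ?G b ch) \<partial>?P)"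
    by (rule nn_integral_mono) (rule pt)
  also have "\<dots> = (\<Sum>b\<in>?B. (\<integral>\<^sup>+ch. ?G b ch \<partial>?P))"
    by (rule nn_integral_sum) simp
  also have "\<dots> \<le> (\<Sum>b\<in>?B. ennreal (real (card {r. (b, r) \<in> Gc}) / 4))"
  proof (rule sum_mono)
    fix b assume bB: "b \<in> ?B"
    have "{r. (b, r) \<in> Gc} \<subseteq> snd ` Gc" by (auto intro: rev_image_eqI)
    then have Sfin: "finite {r. (b, r) \<in> Gc}" using fin finite_subset by blast
    obtain r0 where "(b, r0) \<in> Gc" using bB by auto
    then have Sne: "{r. (b, r) \<in> Gc} \<noteq> {}" by blast
    have Einv: "EE n rep Gc b eps (f(b:=y)) r = EE n rep Gc b eps f r" for f y r
    proof -
      have "{b'\<in>fst ` Gc - {b}. (f(b:=y)) b' = r} = {b'\<in>fst ` Gc - {b}. f b' = r}" by auto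
      then show ?thesis unfolding EE_def by simp
    qed
    show "(\<integral>\<^sup>+ch. ?G b ch \<partial>?P) \<le> ennreal (real (card {r. (b, r) \<in> Gc}) / 4)"
      by (rule pi_bound[OF fB bB Sfin Sne _ Einv]) simp
  qed
  also have "\<dots> = ennreal (\<Sum>b\<in>?B. real (card {r. (b, r) \<in> Gc}) / 4)"
    by (rule sum_ennreal) simp
  also have "(\<Sum>b\<in>?B. real (card {r. (b, r) \<in> Gc}) / 4) = real (card Gc) / 4"
    using card_rows[OF fin] by (simp add: sum_divide_distrib[symmetric])
  finally show ?thesis .
qed

lemma step_lemma:
  assumes epos: "eps > 0" and I: "invS n rep0 col (rep, Gc)"
  shows "\<forall>st'\<in>set_pmf (inner_step n w T eps (csize n rep0) (rep, Gc)). invS n rep0 col st'"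
    and "(\<integral>\<^sup>+st'. of_nat (card (snd st')) \<partial>inner_step n w T eps (csize n rep0) (rep, Gc))
          \<le> ennreal (real (card Gc) / 4)"
proof -
  have fin: "finite Gc" and colr: "\<forall>(b', r)\<in>Gc. \<not> col b' \<and> col r"
    and grow: "\<forall>r. col r \<longrightarrow> cl n rep0 r \<subseteq> cl n rep r"
    using I unfolding invS_def by auto
  have "(\<forall>st'\<in>set_pmf (inner_step n w T eps (csize n rep0) (rep, Gc)). invS n rep0 col st') \<and>
    (\<integral>\<^sup>+st'. of_nat (card (snd st')) \<partial>inner_step n w T eps (csize n rep0) (rep, Gc))
          \<le> ennreal (real (card Gc) / 4)"
  proof (cases "Gc = {}")
    case True
    then have "inner_step n w T eps (csize n rep0) (rep, Gc) = return_pmf (rep, Gc)"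
      by (simp add: inner_step_def Let_def)
    then show ?thesis using I True by simp
  next
    case False
    let ?B = "fst ` Gc"
    let ?Perm = "pmf_of_set (permutations_of_set ?B)"
    let ?P = "Pi_pmf (fst ` Gc) 0 (\<lambda>b. pmf_of_set {r. (b, r) \<in> Gc})"
    have fB: "finite ?B" using fin by simp
    obtain xs where "set xs = ?B" "distinct xs" using finite_distinct_list[OF fB] by blast
    then have pne: "permutations_of_set ?B \<noteq> {}" by blast
    have setP: "set_pmf ?Perm = permutations_of_set ?B"
      using pne by (simp add: set_pmf_of_set)
    have good: "distinct os \<and> set os = ?B" if "os \<in> set_pmf ?Perm" for os
      using that setP unfolding permutations_of_set_def by auto
    have eq: "inner_step n w T eps (csize n rep0) (rep, Gc) =
      bind_pmf ?Perm (\<lambda>os. bind_pmf ?P (\<lambda>choice.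
         return_pmf (repN n eps rep Gc os choice, GcN n w T eps (csize n rep0) rep Gc os choice)))"
      by (rule inner_step_eq[OF False])
    have A: "\<forall>st'\<in>set_pmf (inner_step n w T eps (csize n rep0) (rep, Gc)). invS n rep0 col st'"
    proof
      fix st' assume "st' \<in> set_pmf (inner_step n w T eps (csize n rep0) (rep, Gc))"
      then obtain os ch where os: "os \<in> set_pmf ?Perm"
        and st': "st' = (repN n eps rep Gc os ch, GcN n w T eps (csize n rep0) rep Gc os ch)"
        unfolding eq by auto
      from good[OF os] have osd: "distinct os" and oss: "set os = ?B" by auto
      note ip1 = inv_pres(1)[where w=w and T=T and choice=ch, OF osd oss epos fin colr grow]
      note ip2 = inv_pres(2)[where choice=ch, OF osd oss epos fin colr grow]
      have "finite (GcN n w T eps (csize n rep0) rep Gc os ch)" using ip1 fin finite_subset by blast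
      then show "invS n rep0 col st'" unfolding invS_def st' using ip1 ip2 colr by auto
    qed
    have "(\<integral>\<^sup>+st'. of_nat (card (snd st')) \<partial>inner_step n w T eps (csize n rep0) (rep, Gc))
       = (\<integral>\<^sup>+os. \<integral>\<^sup>+ch. of_nat (card (GcN n w T eps (csize n rep0) rep Gc os ch)) \<partial>?P \<partial>?Perm)"
      unfolding eq by simp
    also have "\<dots> \<le> (\<integral>\<^sup>+os. ennreal (real (card Gc) / 4) \<partial>?Perm)"
    proof (rule nn_integral_mono_AE)
      show "AE os in measure_pmf ?Perm. (\<integral>\<^sup>+ch. of_nat (card (GcN n w T eps (csize n rep0) rep Gc os ch)) \<partial>?P)
          \<le> ennreal (real (card Gc) / 4)"
        unfolding AE_measure_pmf_iff
      proof
        fix os assume "os \<in> set_pmf ?Perm"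
        from good[OF this] have osd: "distinct os" and oss: "set os = ?B" by auto
        show "(\<integral>\<^sup>+ch. of_nat (card (GcN n w T eps (csize n rep0) rep Gc os ch)) \<partial>?P) \<le> ennreal (real (card Gc) / 4)"
          by (rule step_choice_bound[OF epos I osd oss])
      qed
    qed
    also have "\<dots> = ennreal (real (card Gc) / 4)" by simp
    finally show ?thesis using A by blast
  qed
  then show "\<forall>st'\<in>set_pmf (inner_step n w T eps (csize n rep0) (rep, Gc)). invS n rep0 col st'"
    and "(\<integral>\<^sup>+st'. of_nat (card (snd st')) \<partial>inner_step n w T eps (csize n rep0) (rep, Gc))
          \<le> ennreal (real (card Gc) / 4)" by auto
qed

lemma iter_lemma:
  assumes epos: "eps > 0"
  shows "invS n rep0 col st \<Longrightarrow>
    (\<forall>st'\<in>set_pmf (inner_iter n w T eps (csize n rep0) m st). invS n rep0 col st') \<and>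
    (\<integral>\<^sup>+st'. of_nat (card (snd st')) \<partial>inner_iter n w T eps (csize n rep0) m st)
       \<le> ennreal (real (card (snd st)) * (1/4)^m)"
proof (induction m arbitrary: st)
  case 0
  then show ?case by (simp add: ennreal_of_nat_eq_real_of_nat)
next
  case (Suc m)
  obtain rep Gc where st: "st = (rep, Gc)" by (cases st)
  let ?S = "inner_step n w T eps (csize n rep0) st"
  note sl = step_lemma[OF epos Suc.prems[unfolded st], of w T]
  have A: "\<forall>st'\<in>set_pmf (inner_iter n w T eps (csize n rep0) (Suc m) st). invS n rep0 col st'"
    using sl(1) Suc.IH unfolding st by auto
  have "(\<integral>\<^sup>+st'. of_nat (card (snd st')) \<partial>inner_iter n w T eps (csize n rep0) (Suc m) st)
     = (\<integral>\<^sup>+s1. (\<integral>\<^sup>+st'. of_nat (card (snd st')) \<partial>inner_iter n w T eps (csize n rep0) m s1) \<partial>?S)"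
    by simp
  also have "\<dots> \<le> (\<integral>\<^sup>+s1. of_nat (card (snd s1)) * ennreal ((1/4)^m) \<partial>?S)"
  proof (rule nn_integral_mono_AE)
    show "AE s1 in measure_pmf ?S. (\<integral>\<^sup>+st'. of_nat (card (snd st')) \<partial>inner_iter n w T eps (csize n rep0) m s1)
        \<le> of_nat (card (snd s1)) * ennreal ((1/4)^m)"
      unfolding AE_measure_pmf_iff
    proof
      fix s1 assume "s1 \<in> set_pmf ?S"
      then have "invS n rep0 col s1" using sl(1) unfolding st by auto
      from conjunct2[OF Suc.IH[OF this]]
      show "(\<integral>\<^sup>+st'. of_nat (card (snd st')) \<partial>inner_iter n w T eps (csize n rep0) m s1)
        \<le> of_nat (card (snd s1)) * ennreal ((1/4)^m)"
        by (simp add: ennreal_mult ennreal_of_nat_eq_real_of_nat)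
    qed
  qed
  also have "\<dots> = (\<integral>\<^sup>+s1. of_nat (card (snd s1)) \<partial>?S) * ennreal ((1/4)^m)"
    by (rule nn_integral_multc) simp
  also have "\<dots> \<le> ennreal (real (card Gc) / 4) * ennreal ((1/4)^m)"
    using sl(2) unfolding st by (intro mult_right_mono) auto
  also have "\<dots> = ennreal (real (card (snd st)) * (1/4)^(Suc m))"
    unfolding st by (simp add: ennreal_mult[symmetric])
  finally show ?case using A by blast
qed

lemma Gc0_sub: "Gc0 n w rep T col \<subseteq> (rep ` {..<n}) \<times> (rep ` {..<n})"
proof
  fix x assume x: "x \<in> Gc0 n w rep T col"
  obtain b r where xe: "x = (b, r)" by (cases x)
  from x xe have "H_edge n w rep b r" unfolding Gc0_def by auto
  then obtain u v where "u \<in> cl n rep b" "v \<in> cl n rep r" unfolding H_edge_def by blast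
  then have "b \<in> rep ` {..<n}" "r \<in> rep ` {..<n}" unfolding cl_def by auto
  then show "x \<in> (rep ` {..<n}) \<times> (rep ` {..<n})" using xe by simp
qed

lemma Gc0_fin: "finite (Gc0 n w rep T col)"
  by (rule finite_subset[OF Gc0_sub]) simp

lemma Gc0_card: "card (Gc0 n w rep T col) \<le> n * n"
proof -
  have "card (Gc0 n w rep T col) \<le> card ((rep ` {..<n}) \<times> (rep ` {..<n}))"
    by (rule card_mono[OF _ Gc0_sub]) simp
  also have "\<dots> = card (rep ` {..<n}) * card (rep ` {..<n})" by (simp add: card_cartesian_product)
  also have "\<dots> \<le> n * n" using card_image_le[of "{..<n}" rep] by (simp add: mult_mono)
  finally show ?thesis .
qed

lemma Gc0_inv: "invS n rep col (rep, Gc0 n w rep T col)"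
  unfolding invS_def using Gc0_fin by (auto simp: Gc0_def)

lemma prob_bound:
  assumes epos: "eps > 0"
  shows "more_than_inner_rounds n w T eps rep m \<le> real (n * n) * (1/4)^m"
proof -
  let ?c = "ennreal (real (n * n) * (1/4)^m)"
  let ?X = "{st :: cstate. snd st \<noteq> {}}"
  have each: "emeasure (measure_pmf (inner_iter n w T eps (csize n rep) m (rep, Gc0 n w rep T col))) ?X \<le> ?c" for col
  proof -
    let ?M = "inner_iter n w T eps (csize n rep) m (rep, Gc0 n w rep T col)"
    have it: "(\<forall>st'\<in>set_pmf ?M. invS n rep col st') \<and>
      (\<integral>\<^sup>+st'. of_nat (card (snd st')) \<partial>?M) \<le> ennreal (real (card (snd (rep, Gc0 n w rep T col))) * (1/4)^m)"
      by (rule iter_lemma[OF epos Gc0_inv])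
    have "emeasure (measure_pmf ?M) ?X = (\<integral>\<^sup>+st. indicator ?X st \<partial>?M)"
      by (simp add: nn_integral_indicator)
    also have "\<dots> \<le> (\<integral>\<^sup>+st'. of_nat (card (snd st')) \<partial>?M)"
    proof (rule nn_integral_mono_AE)
      show "AE st in measure_pmf ?M. indicator ?X st \<le> (of_nat (card (snd st)) :: ennreal)"
        unfolding AE_measure_pmf_iff
      proof
        fix st assume "st \<in> set_pmf ?M"
        then have "finite (snd st)" using it unfolding invS_def by auto
        then show "indicator ?X st \<le> (of_nat (card (snd st)) :: ennreal)"
          by (cases "snd st = {}") (auto simp: indicator_def Suc_le_eq card_gt_0_iff)
      qed
    qed
    also have "\<dots> \<le> ennreal (real (card (Gc0 n w rep T col)) * (1/4)^m)" using it by simp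
    also have "\<dots> \<le> ?c"
    proof -
      have h: "real (card (Gc0 n w rep T col)) \<le> real (n * n)" using Gc0_card[of n w rep T col] by (simp only: of_nat_le_iff)
      show ?thesis by (rule ennreal_leI, rule mult_right_mono[OF h]) simp
    qed
    finally show ?thesis .
  qed
  have "emeasure (measure_pmf (outer_round_after n w T eps rep m)) ?X
     = (\<integral>\<^sup>+col. emeasure (measure_pmf (inner_iter n w T eps (csize n rep) m (rep, Gc0 n w rep T col))) ?X \<partial>colouring n w rep)"
    unfolding outer_round_after_def by simp
  also have "\<dots> \<le> (\<integral>\<^sup>+col. ?c \<partial>colouring n w rep)"
    by (rule nn_integral_mono) (rule each)
  also have "\<dots> = ?c" by simp
  finally have "ennreal (more_than_inner_rounds n w T eps rep m) \<le> ?c"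
    unfolding more_than_inner_rounds_def by (simp add: measure_pmf.emeasure_eq_measure)
  then show ?thesis by (simp add: ennreal_le_iff)
qed

lemma arith_final:
  fixes k :: real and n :: nat
  assumes n2: "n \<ge> 2"
  shows "real (n * n) * (1/4) ^ (nat \<lfloor>((\<bar>k\<bar> + 4) / ln 4) * ln (real n)\<rfloor>) \<le> real n powr (- k)"
proof -
  define L where "L = ln (real n)"
  define C where "C = (\<bar>k\<bar> + 4) / ln 4"
  define m where "m = nat \<lfloor>C * L\<rfloor>"
  have ln2: "ln 2 \<le> L" unfolding L_def using n2 by simp
  have l2pos: "0 < ln (2::real)" by simp
  have Lpos: "0 < L" using ln2 l2pos by linarith
  have ln4: "ln (4::real) = 2 * ln 2"
    using ln_realpow[of 2 2] by simp
  have ln4pos: "0 < ln (4::real)" using ln4 l2pos by simp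
  have Cnn: "0 \<le> C * L" unfolding C_def using ln4pos Lpos by simp
  have mge: "real m \<ge> C * L - 1" unfolding m_def using Cnn by linarith
  have "real m * ln 4 \<ge> (C * L - 1) * ln 4" using mge ln4pos by (simp add: mult_right_mono)
  also have "(C * L - 1) * ln 4 = (\<bar>k\<bar> + 4) * L - ln 4" unfolding C_def using ln4pos by (simp add: field_simps)
  finally have k1: "real m * ln 4 \<ge> (\<bar>k\<bar> + 4) * L - ln 4" .
  have a: "k * L \<le> \<bar>k\<bar> * L" by (rule mult_right_mono) (use Lpos in auto)
  have d1: "(\<bar>k\<bar> + 4) * L = \<bar>k\<bar> * L + 4 * L" "(k + 2) * L = k * L + 2 * L" by (simp_all add: algebra_simps)
  have l4: "ln 4 \<le> 2 * L" using ln4 ln2 by simp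
  have "(k + 2) * L \<le> (\<bar>k\<bar> + 4) * L - ln 4" unfolding d1 using a l4 by simp
  then have key: "real m * ln 4 \<ge> (k + 2) * L" using k1 by (rule order_trans)
  have np: "0 < real n" using n2 by simp
  have e1: "real (n * n) = exp (2 * L)"
  proof -
    have "exp (2 * L) = exp L * exp L" by (simp only: mult_2 exp_add)
    also have "exp L = real n" unfolding L_def using np by simp
    finally show ?thesis by simp
  qed
  have e2: "(1/4::real) ^ m = exp (- (real m * ln 4))"
  proof -
    have "exp (real m * ln 4) = (4::real) ^ m"
      by (simp only: exp_of_nat_mult) simp
    then have "exp (- (real m * ln 4)) = inverse ((4::real) ^ m)" by (simp only: exp_minus)
    then show ?thesis by (simp add: power_one_over inverse_eq_divide)
  qed
  have e3: "real n powr (- k) = exp (- k * L)" unfolding L_def using np by (simp add: powr_def)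
  have "real (n * n) * (1/4) ^ m = exp (2 * L - real m * ln 4)"
    unfolding e1 e2 by (simp add: exp_add[symmetric])
  also have "\<dots> \<le> exp (- k * L)" using key by (simp add: algebra_simps)
  finally show ?thesis unfolding e3 m_def C_def L_def .
qed

theorem mainTheorem6:
  fixes eps :: real
  assumes "eps > 0"
  shows "\<forall>k::real. \<exists>C>0. \<forall>(n::nat) (w::nat \<Rightarrow> nat \<Rightarrow> real) (rep::labeling) (T::real).
           (\<forall>x<n. \<forall>y<n. w x y \<ge> 0 \<and> w x y = w y x) \<and> (\<forall>x<n. w x x = 0)
           \<and> (\<exists>a c. H_edge n w rep a c \<and> W n w rep a c \<ge> T)
           \<longrightarrow> more_than_inner_rounds n w T eps rep (nat \<lfloor>C * ln (real n)\<rfloor>) \<le> real n powr (- k)"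
proof (intro allI)
  fix k :: real
  define C where "C = (\<bar>k\<bar> + 4) / ln (4::real)"
  have ln4pos: "0 < ln (4::real)" by simp
  have Cpos: "C > 0" unfolding C_def using ln4pos by (simp add: add_nonneg_pos)
  show "\<exists>C>0. \<forall>(n::nat) (w::nat \<Rightarrow> nat \<Rightarrow> real) (rep::labeling) (T::real).
           (\<forall>x<n. \<forall>y<n. w x y \<ge> 0 \<and> w x y = w y x) \<and> (\<forall>x<n. w x x = 0)
           \<and> (\<exists>a c. H_edge n w rep a c \<and> W n w rep a c \<ge> T)
           \<longrightarrow> more_than_inner_rounds n w T eps rep (nat \<lfloor>C * ln (real n)\<rfloor>) \<le> real n powr (- k)"
  proof (intro exI[of _ C] conjI allI impI)
    show "C > 0" by (rule Cpos)
    fix n :: nat and w :: "nat \<Rightarrow> nat \<Rightarrow> real" and rep :: labeling and T :: real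
    assume h: "(\<forall>x<n. \<forall>y<n. w x y \<ge> 0 \<and> w x y = w y x) \<and> (\<forall>x<n. w x x = 0)
           \<and> (\<exists>a c. H_edge n w rep a c \<and> W n w rep a c \<ge> T)"
    then obtain a c where "H_edge n w rep a c" by blast
    then obtain x y where ac: "a \<noteq> c" and x: "x \<in> cl n rep a" and y: "y \<in> cl n rep c"
      unfolding H_edge_def by blast
    then have "x < n" "y < n" "rep x = a" "rep y = c" unfolding cl_def by auto
    then have "x \<noteq> y" using ac by auto
    then have n2: "n \<ge> 2" using \<open>x < n\<close> \<open>y < n\<close> by linarith
    have "more_than_inner_rounds n w T eps rep (nat \<lfloor>C * ln (real n)\<rfloor>)
        \<le> real (n * n) * (1/4) ^ (nat \<lfloor>C * ln (real n)\<rfloor>)"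
      by (rule prob_bound[OF assms])
    also have "\<dots> \<le> real n powr (- k)"
      unfolding C_def by (rule arith_final[OF n2])
    finally show "more_than_inner_rounds n w T eps rep (nat \<lfloor>C * ln (real n)\<rfloor>) \<le> real n powr (- k)" .
  qed
qed

end
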